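(* Let $p$ be an odd Ramanujan prime. Write $p=p_n$ and let $q$ be the smallest prime greater than $p/2$. Then all integers $\frac{p+1}{2},\frac{p+3}{2},\dots,\frac{p_{n+1}-1}{2}$ are composite, and the open interval $(p,2q)$ contains a prime.
   Context: $p_k$ denotes the $k$-th prime and $\pi(x)$ the number of primes $\le x$. For $n\ge 1$, the $n$-th Ramanujan prime $R_n$ is the smallest positive integer such that $\pi(x)-\pi(x/2)\ge n$ for all real $x\ge R_n$. A Ramanujan prime is a number of the form $R_n$ (these are primes: $2,11,17,29,41,\dots$). *)

theory Defs
  imports "HOL-Computational_Algebra.Primes" Complex_Main
begin

definition prime_pi :: "real \<Rightarrow> nat" where
  "prime_pi x = card {p::nat. prime p \<and> real p \<le> x}"

definition ramanujan_prop :: "nat \<Rightarrow> nat \<Rightarrow> bool" where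
  "ramanujan_prop n r \<longleftrightarrow> (\<forall>x::real. x \<ge> real r \<longrightarrow> prime_pi x - prime_pi (x / 2) \<ge> n)"

definition is_nth_ramanujan :: "nat \<Rightarrow> nat \<Rightarrow> bool" where
  "is_nth_ramanujan n r \<longleftrightarrow> r > 0 \<and> ramanujan_prop n r \<and> (\<forall>s. 0 < s \<and> s < r \<longrightarrow> \<not> ramanujan_prop n s)"

definition ramanujan_prime :: "nat \<Rightarrow> bool" where
  "ramanujan_prime r \<longleftrightarrow> (\<exists>n\<ge>1. is_nth_ramanujan n r)"

end

theory Submission
  imports Defs
begin

lemma finP: "finite {p::nat. prime p \<and> real p \<le> x}"
proof (rule finite_subset[of _ "{..nat \<lceil>x\<rceil>}"])
  show "{p::nat. prime p \<and> real p \<le> x} \<subseteq> {..nat \<lceil>x\<rceil>}"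
  proof
    fix p assume "p \<in> {p::nat. prime p \<and> real p \<le> x}"
    then have "real p \<le> x" by simp
    then have "real p \<le> real_of_int \<lceil>x\<rceil>" using le_of_int_ceiling[of x] by linarith
    then have "int p \<le> \<lceil>x\<rceil>" by linarith
    then show "p \<in> {..nat \<lceil>x\<rceil>}" by simp
  qed
qed simp

lemma key:
  fixes p k n :: nat and x :: real
  assumes R: "ramanujan_prop n p"
    and x1: "x \<ge> real p - 1" and x2: "x < real p"
    and fx: "prime_pi x - prime_pi (x / 2) < n"
    and k: "prime k" and k2: "2 * k \<ge> p"
    and np: "\<forall>r. p < r \<and> r \<le> 2 * k \<longrightarrow> \<not> prime r"
  shows False
proof -
  have A: "prime_pi (real (2*k)) - prime_pi (real (2*k) / 2) \<ge> n"
  proof -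
    have "real (2*k) \<ge> real p" using k2 by linarith
    then show ?thesis using R unfolding ramanujan_prop_def by blast
  qed
  have B: "prime_pi (real (2*k)) \<le> prime_pi x + 1"
  proof -
    have "{r::nat. prime r \<and> real r \<le> real (2*k)} \<subseteq> insert p {r::nat. prime r \<and> real r \<le> x}"
    proof
      fix r assume "r \<in> {r::nat. prime r \<and> real r \<le> real (2*k)}"
      then have r: "prime r" "r \<le> 2*k" by auto
      then have "r \<le> p" using np by (meson not_le)
      then show "r \<in> insert p {r::nat. prime r \<and> real r \<le> x}"
        using r x1 by (cases "r = p") auto
    qed
    then have "card {r::nat. prime r \<and> real r \<le> real (2*k)} \<le> card (insert p {r::nat. prime r \<and> real r \<le> x})"
      by (intro card_mono) (auto simp: finP)
    also have "\<dots> \<le> card {r::nat. prime r \<and> real r \<le> x} + 1"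
      by (simp add: card_insert_if finP)
    finally show ?thesis unfolding prime_pi_def .
  qed
  have C: "prime_pi (real (2*k) / 2) \<ge> prime_pi (x/2) + 1"
  proof -
    have kx: "real k > x / 2" using k2 x2 by linarith
    have "insert k {r::nat. prime r \<and> real r \<le> x/2} \<subseteq> {r::nat. prime r \<and> real r \<le> real (2*k) / 2}"
      using k kx by auto
    then have "card (insert k {r::nat. prime r \<and> real r \<le> x/2}) \<le> card {r::nat. prime r \<and> real r \<le> real (2*k) / 2}"
      by (intro card_mono) (auto simp: finP)
    moreover have "card (insert k {r::nat. prime r \<and> real r \<le> x/2}) = card {r::nat. prime r \<and> real r \<le> x/2} + 1"
    proof -
      have "k \<notin> {r::nat. prime r \<and> real r \<le> x/2}" using kx by auto
      then have "card (insert k {r::nat. prime r \<and> real r \<le> x/2}) = Suc (card {r::nat. prime r \<and> real r \<le> x/2})"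
        by (rule card_insert_disjoint[OF finP])
      then show ?thesis by simp
    qed
    ultimately show ?thesis unfolding prime_pi_def by simp
  qed
  from A B C fx show False by linarith
qed

theorem lemma2:
  fixes p p' q :: nat
  assumes "ramanujan_prime p" and "odd p"
    and "prime p'" and "p < p'" and "\<forall>r. p < r \<and> r < p' \<longrightarrow> \<not> prime r"
    and "prime q" and "real q > real p / 2"
    and "\<forall>r. prime r \<and> real r > real p / 2 \<longrightarrow> q \<le> r"
  shows "(\<forall>k. (p + 1) div 2 \<le> k \<and> k \<le> (p' - 1) div 2 \<longrightarrow> k > 1 \<and> \<not> prime k)
         \<and> (\<exists>r. prime r \<and> p < r \<and> r < 2 * q)"
proof -
  obtain n where n: "n \<ge> 1" "is_nth_ramanujan n p" using assms(1) unfolding ramanujan_prime_def by blast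
  have R: "ramanujan_prop n p" and p0: "p > 0"
    and min: "\<forall>s. 0 < s \<and> s < p \<longrightarrow> \<not> ramanujan_prop n s"
    using n(2) unfolding is_nth_ramanujan_def by auto
  have p2: "p \<ge> 2"
  proof (rule ccontr)
    assume "\<not> p \<ge> 2"
    then have "p = 1" using p0 by simp
    have "prime_pi 1 = 0" unfolding prime_pi_def
    proof -
      have "{p::nat. prime p \<and> real p \<le> 1} = {}"
      proof (rule equals0I)
        fix r assume "r \<in> {p::nat. prime p \<and> real p \<le> 1}"
        then have "prime r" "r \<le> 1" by auto
        then show False using prime_ge_2_nat[of r] by linarith
      qed
      then show "card {p::nat. prime p \<and> real p \<le> 1} = 0" by simp
    qed
    have "n \<le> prime_pi 1 - prime_pi (1/2)" using R \<open>p = 1\<close> unfolding ramanujan_prop_def by simp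
    moreover have "prime_pi (1/2) \<le> prime_pi 1" unfolding prime_pi_def
      by (rule card_mono[OF finP]) auto
    ultimately show False using \<open>prime_pi 1 = 0\<close> n(1) by linarith
  qed
  then have p3: "p \<ge> 3" using assms(2) by presburger
  have "\<not> ramanujan_prop n (p - 1)" using min p2 by simp
  then obtain x where x1: "x \<ge> real (p - 1)" and fx: "prime_pi x - prime_pi (x / 2) < n"
    unfolding ramanujan_prop_def by (auto simp: not_le)
  have x2: "x < real p"
  proof (rule ccontr)
    assume "\<not> x < real p"
    then have "real p \<le> x" by simp
    then have "n \<le> prime_pi x - prime_pi (x / 2)" using R unfolding ramanujan_prop_def by blast
    then show False using fx by linarith
  qed
  have x1': "x \<ge> real p - 1" using x1 p2 by (simp add: of_nat_diff)
  show ?thesis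
  proof (intro conjI allI impI)
    fix k assume k: "(p + 1) div 2 \<le> k \<and> k \<le> (p' - 1) div 2"
    show "k > 1" using k p3 by linarith
    show "\<not> prime k"
    proof
      assume "prime k"
      show False
      proof (rule key[OF R x1' x2 fx \<open>prime k\<close>])
        show "2 * k \<ge> p" using k by linarith
        show "\<forall>r. p < r \<and> r \<le> 2 * k \<longrightarrow> \<not> prime r" 
        proof (intro allI impI)
          fix r assume r: "p < r \<and> r \<le> 2 * k"
          then have "r < p'" using k by linarith
          then show "\<not> prime r" using assms(5) r by blast
        qed
      qed
    qed
  next
    show "\<exists>r. prime r \<and> p < r \<and> r < 2 * q"
    proof (rule ccontr)
      assume H: "\<not> (\<exists>r. prime r \<and> p < r \<and> r < 2 * q)"
      show False
      proof (rule key[OF R x1' x2 fx \<open>prime q\<close>])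
        show "2 * q \<ge> p" using assms(7) by linarith
        show "\<forall>r. p < r \<and> r \<le> 2 * q \<longrightarrow> \<not> prime r"
        proof (intro allI impI)
          fix r assume r: "p < r \<and> r \<le> 2 * q"
          show "\<not> prime r"
          proof (cases "r = 2 * q")
            case True
            have "q > 1" using assms(6) prime_gt_1_nat by blast
            then show ?thesis using True prime_product[of 2 q] by auto
          next
            case False
            then show ?thesis using H r by auto
          qed
        qed
      qed
    qed
  qed
qed

end
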